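(* Assume (A), (R), (S) and let $c=(c_k)$ and $d=(d_k)$ be global solutions of (E) (with initial data in $\ell^1_1$). Then for each $\mu\ge1$, $$\frac{d}{dt}\sum_{k=1}^\infty k^\mu|c_k-d_k|\le\Bigl(2A_*(C_\mu+2)\sum_{\ell=1}^\infty\ell^{\mu+\beta}(c_\ell+d_\ell)-R_*\Bigr)\sum_{k=1}^\infty k^\mu|c_k-d_k|\quad\text{for all }t>0,$$ where $C_\mu=2^{\max\{\mu-2,0\}}\max\{\mu,\mu(\mu-1)\}$.
   Context: Throughout, $\mathbb N=\{1,2,\dots\}$. We consider the forced discrete coagulation equation $$\frac{d}{dt}c_k=\frac12\sum_{\ell=1}^{k-1}a_{k-\ell,\ell}c_{k-\ell}c_\ell-c_k\sum_{\ell=1}^{\infty}a_{k,\ell}c_\ell+s_k-r_kc_k,\qquad k\in\mathbb N,\tag{E}$$ with real coefficients satisfying the standing assumptions: (A) $a_{k,\ell}=a_{\ell,k}$ and $0\le a_{k,\ell}\le A_*(k^\alpha\ell^\beta+k^\beta\ell^\alpha)$ for all $k,\ell\in\mathbb N$, with constants $A_*>0$, $\alpha,\beta\in[0,1]$, $\alpha\le\beta$; (R) $r_k\ge R_*k^\gamma$ for all $k\in\mathbb N$, with $R_*>0$ and $\gamma>\max\{0,\alpha+\beta-1\}$; (S) $s_k\ge 0$ for all $k$, and for every $\mu\ge0$ there is $\mathfrak s_\mu>0$ with $\sum_{k\ge1}k^\mu s_k\le\mathfrak s_\mu$. For $\mu\ge0$, $\ell^1_\mu$ is the set of sequences $(c_k)_{k\in\mathbb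 N}$ with $c_k\in[0,\infty)$ and $\sum_k k^\mu c_k<\infty$. Solution: a sequence $c=(c_k)_{k\in\mathbb N}$ of continuous functions $c_k:[0,T)\to[0,\infty)$ is a solution of (E) on $[0,T)$ with initial condition $c^{\mathrm{in}}\in\ell^1_1$ if (i) for each $k$, (E) holds for all $t\in(0,T)$; (ii) for each $\mu\ge1$, $c\in L^\infty([0,T),\ell^1_1)\cap C^1((0,T),\ell^1_\mu)$; (iii) $c_k(0)=c_k^{\mathrm{in}}$ for all $k$. It is a global solution if $T=\infty$. *)

theory Defs
  imports "HOL-Analysis.Analysis"
begin

text \<open>Sequences are indexed by nat; only indices k \<ge> 1 are meaningful (index 0 is ignored).
  A time-dependent sequence is c :: nat \<Rightarrow> real \<Rightarrow> real, c k t = c_k(t).\<close>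

definition wsummable :: "real \<Rightarrow> (nat \<Rightarrow> real) \<Rightarrow> bool" where
  "wsummable \<mu> x \<longleftrightarrow> summable (\<lambda>k. real (Suc k) powr \<mu> * \<bar>x (Suc k)\<bar>)"

definition wnorm :: "real \<Rightarrow> (nat \<Rightarrow> real) \<Rightarrow> real" where
  "wnorm \<mu> x = (\<Sum>k. real (Suc k) powr \<mu> * \<bar>x (Suc k)\<bar>)"

definition coag_rhs ::
  "(nat \<Rightarrow> nat \<Rightarrow> real) \<Rightarrow> (nat \<Rightarrow> real) \<Rightarrow> (nat \<Rightarrow> real) \<Rightarrow> (nat \<Rightarrow> real \<Rightarrow> real) \<Rightarrow> nat \<Rightarrow> real \<Rightarrow> real" where
  "coag_rhs a s r c k t =
     (1/2) * (\<Sum>l=1..k-1. a (k-l) l * c (k-l) t * c l t)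
     - c k t * (\<Sum>l. a k (Suc l) * c (Suc l) t)
     + s k - r k * c k t"

definition is_global_solution ::
  "(nat \<Rightarrow> nat \<Rightarrow> real) \<Rightarrow> (nat \<Rightarrow> real) \<Rightarrow> (nat \<Rightarrow> real) \<Rightarrow> (nat \<Rightarrow> real \<Rightarrow> real) \<Rightarrow> bool" where
  "is_global_solution a s r c \<longleftrightarrow>
     (\<forall>k\<ge>1. continuous_on {0..} (c k) \<and> (\<forall>t\<ge>0. c k t \<ge> 0))
   \<and> (\<forall>k\<ge>1. \<forall>t>0. (c k has_real_derivative coag_rhs a s r c k t) (at t))
   \<and> (\<exists>M. \<forall>t\<ge>0. wsummable 1 (\<lambda>k. c k t) \<and> wnorm 1 (\<lambda>k. c k t) \<le> M)
   \<and> (\<forall>\<mu>\<ge>1. \<exists>c'. \<forall>t>0.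
          wsummable \<mu> (\<lambda>k. c k t) \<and> wsummable \<mu> (\<lambda>k. c' k t)
        \<and> ((\<lambda>h. wnorm \<mu> (\<lambda>k. (c k h - c k t) / (h - t) - c' k t)) \<longlongrightarrow> 0) (at t)
        \<and> ((\<lambda>h. wnorm \<mu> (\<lambda>k. c' k h - c' k t)) \<longlongrightarrow> 0) (at t))"

definition upper_right_dini :: "(real \<Rightarrow> real) \<Rightarrow> real \<Rightarrow> ereal" where
  "upper_right_dini F t = Limsup (at_right t) (\<lambda>h. ereal ((F h - F t) / (h - t)))"

end

theory Submission imports Defs begin

lemma abs_quot_lim:
  fixes u y t :: real
  shows "((\<lambda>h. (\<bar>u + (h - t) * y\<bar> - \<bar>u\<bar>) / (h - t)) \<longlongrightarrow>
           (if u = 0 then \<bar>y\<bar> else sgn u * y)) (at_right t)"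
proof (cases "u = 0")
  case True
  have "eventually (\<lambda>h. (\<bar>u + (h - t) * y\<bar> - \<bar>u\<bar>) / (h - t) = \<bar>y\<bar>) (at_right t)"
    using eventually_at_right_real[of t "t+1", OF less_add_one]
    by eventually_elim (use True in \<open>auto simp: abs_mult\<close>)
  then show ?thesis using True by (simp add: tendsto_eventually)
next
  case False
  define \<epsilon> where "\<epsilon> = \<bar>u\<bar> / (\<bar>y\<bar> + 1)"
  have ep: "\<epsilon> > 0" using False by (simp add: \<epsilon>_def)
  have "eventually (\<lambda>h. (\<bar>u + (h - t) * y\<bar> - \<bar>u\<bar>) / (h - t) = sgn u * y) (at_right t)"
    using eventually_at_right_real[of t "t+\<epsilon>"] ep
  proof -
    have "t < t + \<epsilon>" using ep by simp
    from eventually_at_right_real[OF this]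
    show ?thesis
    proof eventually_elim
    case (elim h)
    then have h: "h - t > 0" "h - t < \<epsilon>" by auto
    have "\<bar>(h - t) * y\<bar> \<le> (h - t) * \<bar>y\<bar>" using h by (simp add: abs_mult)
    also have "\<dots> < \<epsilon> * (\<bar>y\<bar> + 1)"
    proof -
      have "(h - t) * \<bar>y\<bar> \<le> (h - t) * (\<bar>y\<bar> + 1)" using h by simp
      also have "\<dots> < \<epsilon> * (\<bar>y\<bar> + 1)"
        by (rule mult_strict_right_mono) (use h in auto)
      finally show ?thesis .
    qed
    also have "\<dots> = \<bar>u\<bar>" using \<epsilon>_def by simp
    finally have lt: "\<bar>(h - t) * y\<bar> < \<bar>u\<bar>" .
    have "\<bar>u + (h - t) * y\<bar> = \<bar>u\<bar> + sgn u * ((h - t) * y)"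
      using lt False by (cases "u > 0") (auto simp: abs_if sgn_if split: if_splits)
    then show ?case using h by simp
  qed
  qed
  then show ?thesis using False by (simp add: tendsto_eventually)
qed

lemma abs_quot_bound:
  fixes u y d :: real
  assumes "d > 0"
  shows "\<bar>(\<bar>u + d * y\<bar> - \<bar>u\<bar>) / d\<bar> \<le> \<bar>y\<bar>"
proof -
  have "\<bar>\<bar>u + d * y\<bar> - \<bar>u\<bar>\<bar> \<le> d * \<bar>y\<bar>"
    using abs_triangle_ineq3[of "u + d * y" u] assms by (simp add: abs_mult)
  then show ?thesis using assms by (simp add: abs_divide divide_le_eq mult.commute)
qed

lemma aux_abs_div:
  fixes a d y :: real
  assumes "d > 0"
  shows "\<bar>a - d * y\<bar> = d * \<bar>a / d - y\<bar>"
proof -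
  have "d * \<bar>a / d - y\<bar> = \<bar>d * (a / d - y)\<bar>" using assms by (simp add: abs_mult)
  also have "\<dots> = \<bar>a - d * y\<bar>" using assms by (simp add: right_diff_distrib)
  finally show ?thesis by simp
qed

lemma dini_series:
  fixes x :: "nat \<Rightarrow> real \<Rightarrow> real" and w y :: "nat \<Rightarrow> real" and t :: real
  assumes w: "\<And>k. w k \<ge> 0"
    and sx: "\<And>h. h \<ge> t \<Longrightarrow> summable (\<lambda>k. w k * \<bar>x k h\<bar>)"
    and sy: "summable (\<lambda>k. w k * \<bar>y k\<bar>)"
    and sq: "\<And>h. h > t \<Longrightarrow> summable (\<lambda>k. w k * \<bar>(x k h - x k t) / (h - t) - y k\<bar>)"
    and lim: "((\<lambda>h. \<Sum>k. w k * \<bar>(x k h - x k t) / (h - t) - y k\<bar>) \<longlongrightarrow> 0) (at_right t)"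
  shows "((\<lambda>h. ((\<Sum>k. w k * \<bar>x k h\<bar>) - (\<Sum>k. w k * \<bar>x k t\<bar>)) / (h - t)) \<longlongrightarrow>
           (\<Sum>k. w k * (if x k t = 0 then \<bar>y k\<bar> else sgn (x k t) * y k))) (at_right t)"
proof -
  define D where "D = (\<Sum>k. w k * (if x k t = 0 then \<bar>y k\<bar> else sgn (x k t) * y k))"
  define g where "g k h = w k * ((\<bar>x k t + (h - t) * y k\<bar> - \<bar>x k t\<bar>) / (h - t))" for k h
  define G where "G h = (\<Sum>k. g k h)" for h
  define Q where "Q h = ((\<Sum>k. w k * \<bar>x k h\<bar>) - (\<Sum>k. w k * \<bar>x k t\<bar>)) / (h - t)" for h
  have gb: "\<bar>g k h\<bar> \<le> w k * \<bar>y k\<bar>" if "h > t" for k h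
  proof -
    have "w k * \<bar>(\<bar>x k t + (h - t) * y k\<bar> - \<bar>x k t\<bar>) / (h - t)\<bar> \<le> w k * \<bar>y k\<bar>"
      by (rule mult_left_mono[OF abs_quot_bound]) (use that w in auto)
    then show ?thesis using w[of k] by (simp add: g_def abs_mult)
  qed
  have sg: "summable (\<lambda>k. g k h)" if "h > t" for h
    by (rule summable_comparison_test'[OF sy]) (use gb that in auto)
  have "(G \<longlongrightarrow> D) (at_right t)"
  proof -
    have "((\<lambda>h. suminf (\<lambda>k. g k h)) \<longlongrightarrow> suminf (\<lambda>k. w k * (if x k t = 0 then \<bar>y k\<bar> else sgn (x k t) * y k))) (at_right t)"
    proof (rule tannerys_theorem[THEN conjunct2, THEN conjunct2])
      show "((\<lambda>h. g k h) \<longlongrightarrow> w k * (if x k t = 0 then \<bar>y k\<bar> else sgn (x k t) * y k)) (at_right t)" for k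
        unfolding g_def by (intro tendsto_mult_left abs_quot_lim)
      show "\<forall>\<^sub>F (k, h) in at_top \<times>\<^sub>F at_right t. norm (g k h) \<le> w k * \<bar>y k\<bar>"
        unfolding eventually_prod_filter
        by (rule exI[of _ "\<lambda>_. True"], rule exI[of _ "\<lambda>h. h > t"])
           (use gb in \<open>auto simp: eventually_at_right_less\<close>)
    qed (use sy in auto)
    moreover have "G = (\<lambda>h. \<Sum>k. g k h)" by (rule ext) (simp add: G_def)
    ultimately show ?thesis by (simp add: D_def)
  qed
  moreover have "((\<lambda>h. Q h - G h) \<longlongrightarrow> 0) (at_right t)"
  proof (rule Lim_null_comparison[OF _ lim])
    show "\<forall>\<^sub>F h in at_right t. norm (Q h - G h) \<le> (\<Sum>k. w k * \<bar>(x k h - x k t) / (h - t) - y k\<bar>)"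
      using eventually_at_right_less[of t]
    proof eventually_elim
      case (elim h)
      have s1: "summable (\<lambda>k. w k * \<bar>x k h\<bar>)" and s0: "summable (\<lambda>k. w k * \<bar>x k t\<bar>)"
        using sx elim by auto
      have "Q h = (\<Sum>k. (w k * \<bar>x k h\<bar> - w k * \<bar>x k t\<bar>) / (h - t))"
        unfolding Q_def by (subst suminf_diff[OF s1 s0], rule suminf_divide[symmetric])
          (rule summable_diff[OF s1 s0])
      then have "Q h - G h = (\<Sum>k. (w k * \<bar>x k h\<bar> - w k * \<bar>x k t\<bar>) / (h - t)) - (\<Sum>k. g k h)"
        by (simp add: G_def)
      also have "\<dots> = (\<Sum>k. (w k * \<bar>x k h\<bar> - w k * \<bar>x k t\<bar>) / (h - t) - g k h)"
        by (rule suminf_diff[OF summable_divide[OF summable_diff[OF s1 s0]] sg[OF elim]])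
      also have "\<dots> = (\<Sum>k. w k * ((\<bar>x k h\<bar> - \<bar>x k t + (h - t) * y k\<bar>) / (h - t)))"
        by (rule suminf_cong) (simp add: g_def diff_divide_distrib right_diff_distrib)
      finally have eq: "Q h - G h = \<dots>" .
      have tb: "norm (w k * ((\<bar>x k h\<bar> - \<bar>x k t + (h - t) * y k\<bar>) / (h - t)))
               \<le> w k * \<bar>(x k h - x k t) / (h - t) - y k\<bar>" for k
      proof -
        have "\<bar>\<bar>x k h\<bar> - \<bar>x k t + (h - t) * y k\<bar>\<bar> \<le> \<bar>x k h - x k t - (h - t) * y k\<bar>"
          by (rule order_trans[OF abs_triangle_ineq3]) (simp add: algebra_simps)
        also have "\<dots> = (h - t) * \<bar>(x k h - x k t) / (h - t) - y k\<bar>"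
          using aux_abs_div[of "h - t" "x k h - x k t" "y k"] elim by simp
        finally have "\<bar>(\<bar>x k h\<bar> - \<bar>x k t + (h - t) * y k\<bar>) / (h - t)\<bar> \<le> \<bar>(x k h - x k t) / (h - t) - y k\<bar>"
          using elim by (simp add: abs_divide divide_le_eq mult.commute)
        then have "w k * \<bar>(\<bar>x k h\<bar> - \<bar>x k t + (h - t) * y k\<bar>) / (h - t)\<bar> \<le> w k * \<bar>(x k h - x k t) / (h - t) - y k\<bar>"
          by (rule mult_left_mono) (rule w)
        then show ?thesis using w[of k] by (simp only: real_norm_def abs_mult abs_of_nonneg)
      qed
      show ?case unfolding eq by (rule norm_suminf_le[OF tb sq[OF elim]])
    qed
  qed
  ultimately have "((\<lambda>h. G h + (Q h - G h)) \<longlongrightarrow> D + 0) (at_right t)"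
    by (rule tendsto_add)
  then have "(Q \<longlongrightarrow> D) (at_right t)" by simp
  then show ?thesis unfolding D_def by (simp add: Q_def[abs_def])
qed

lemma shift_has_sum:
  fixes f :: "nat \<Rightarrow> real"
  assumes "summable (\<lambda>k. \<bar>f (Suc k)\<bar>)"
  shows "(f has_sum (\<Sum>k. f (Suc k))) {1..}"
proof -
  have "((\<lambda>k. f (Suc k)) has_sum (\<Sum>k. f (Suc k))) UNIV"
    using norm_summable_imp_has_sum[of "\<lambda>k. f (Suc k)"] assms
      summable_sums[OF summable_rabs_cancel[OF assms]]
    by simp
  then have "((f \<circ> Suc) has_sum (\<Sum>k. f (Suc k))) UNIV" by (simp add: o_def)
  then have "(f has_sum (\<Sum>k. f (Suc k))) (Suc ` UNIV)"
    by (subst has_sum_reindex) auto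
  moreover have "Suc ` UNIV = {1..}"
  proof (intro set_eqI iffI)
    fix x :: nat assume "x \<in> {1..}"
    then have "x = Suc (x - 1)" by simp
    then show "x \<in> Suc ` UNIV" by blast
  qed auto
  ultimately show ?thesis by simp
qed

lemma shift_infsum:
  fixes f :: "nat \<Rightarrow> real"
  assumes "summable (\<lambda>k. \<bar>f (Suc k)\<bar>)"
  shows "(\<Sum>k. f (Suc k)) = infsum f {1..}" "f summable_on {1..}"
  using shift_has_sum[OF assms] by (auto simp: has_sum_iff)

lemma prod_summable:
  fixes f g :: "'a \<Rightarrow> real"
  assumes f: "f summable_on A" and g: "g summable_on B"
    and fn: "\<And>x. x \<in> A \<Longrightarrow> f x \<ge> 0" and gn: "\<And>y. y \<in> B \<Longrightarrow> g y \<ge> 0"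
  shows "(\<lambda>(x, y). f x * g y) summable_on (A \<times> B)"
    "infsum (\<lambda>(x, y). f x * g y) (A \<times> B) = infsum f A * infsum g B"
proof -
  have hs: "((\<lambda>y. (\<lambda>(x, y). f x * g y) (x, y)) has_sum f x * infsum g B) B" if "x \<in> A" for x
    using has_sum_cmult_right[OF has_sum_infsum[OF g], of "f x"] by simp
  have s2: "(\<lambda>x. f x * infsum g B) summable_on A"
    using summable_on_cmult_left[OF f] by simp
  show S: "(\<lambda>(x, y). f x * g y) summable_on (A \<times> B)"
    by (rule summable_on_SigmaI[OF hs s2]) (use fn gn in auto)
  have "infsum (\<lambda>(x, y). f x * g y) (A \<times> B) = infsum (\<lambda>x. infsum (\<lambda>y. (\<lambda>(x, y). f x * g y) (x, y)) B) A"
    using infsum_Sigma_banach[OF S] by simp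
  also have "\<dots> = infsum (\<lambda>x. f x * infsum g B) A"
    by (rule infsum_cong) (use hs in \<open>simp add: has_sum_iff\<close>)
  also have "\<dots> = infsum f A * infsum g B" by (rule infsum_cmult_left[OF f])
  finally show "infsum (\<lambda>(x, y). f x * g y) (A \<times> B) = infsum f A * infsum g B" .
qed

lemma infsum_diff_real:
  fixes f g :: "'a \<Rightarrow> real"
  assumes "f summable_on A" "g summable_on A"
  shows "infsum (\<lambda>x. f x - g x) A = infsum f A - infsum g A"
    "(\<lambda>x. f x - g x) summable_on A"
proof -
  have "((\<lambda>x. f x + - g x) has_sum (infsum f A + - infsum g A)) A"
    by (intro has_sum_add has_sum_uminusI) (use assms in auto)
  then show "infsum (\<lambda>x. f x - g x) A = infsum f A - infsum g A"
    "(\<lambda>x. f x - g x) summable_on A" by (auto simp: has_sum_iff)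
qed

lemma powr_diff_le:
  fixes x j \<mu> :: real
  assumes "x > 0" "j > 0" "\<mu> \<ge> 1"
  shows "(x + j) powr \<mu> - x powr \<mu> \<le> \<mu> * (x + j) powr (\<mu> - 1) * j"
proof -
  have "\<exists>z. x < z \<and> z < x + j \<and> (x + j) powr \<mu> - x powr \<mu> = (x + j - x) * (\<mu> * z powr (\<mu> - 1))"
    by (rule MVT2) (use assms in \<open>auto intro!: has_real_derivative_powr\<close>)
  then obtain z where z: "x < z" "z < x + j" "(x + j) powr \<mu> - x powr \<mu> = j * (\<mu> * z powr (\<mu> - 1))"
    by auto
  have "z powr (\<mu> - 1) \<le> (x + j) powr (\<mu> - 1)"
    by (rule powr_mono2) (use assms z in auto)
  then have "j * (\<mu> * z powr (\<mu> - 1)) \<le> j * (\<mu> * (x + j) powr (\<mu> - 1))"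
    using assms by (intro mult_left_mono) auto
  then show ?thesis using z by (simp add: mult_ac)
qed

lemma const_le:
  fixes \<mu> :: real
  assumes "\<mu> \<ge> 1"
  shows "\<mu> * 2 powr (\<mu> - 1) \<le> 2 * (2 powr (max (\<mu> - 2) 0) * max \<mu> (\<mu> * (\<mu> - 1)))"
proof (cases "\<mu> \<ge> 2")
  case True
  have "2 powr (\<mu> - 1) = 2 * 2 powr (\<mu> - 2)"
    by (simp add: powr_diff powr_add[symmetric])
  moreover have "\<mu> \<le> max \<mu> (\<mu> * (\<mu> - 1))" by simp
  ultimately show ?thesis using True by (simp add: mult_left_mono)
next
  case False
  have "2 powr (\<mu> - 1) \<le> 2 powr 1" by (rule powr_mono) (use False in auto)
  then have "\<mu> * 2 powr (\<mu> - 1) \<le> \<mu> * 2" using assms by (intro mult_left_mono) auto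
  then show ?thesis using False by simp
qed

lemma sum_le_2prod:
  fixes x y :: real
  assumes "x \<ge> 1" "y \<ge> 1"
  shows "x + y \<le> 2 * (x * y)"
proof -
  have "x \<le> x * y" "y \<le> x * y" using assms by (simp_all add: mult_le_cancel_left1 mult_le_cancel_right1)
  then show ?thesis by simp
qed

lemma B_bound:
  fixes x y \<mu> :: real
  assumes x: "x \<ge> 1" and y: "y \<ge> 1" and mu: "\<mu> \<ge> 1"
  shows "(x + y) powr \<mu> - x powr \<mu> + y powr \<mu> \<le> (\<mu> * 2 powr (\<mu> - 1) + 1) * x powr (\<mu> - 1) * y powr \<mu>"
proof -
  have "(x + y) powr (\<mu> - 1) \<le> (2 * (x * y)) powr (\<mu> - 1)"
    by (rule powr_mono2) (use x y mu sum_le_2prod[OF x y] in auto)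
  also have "\<dots> = 2 powr (\<mu> - 1) * x powr (\<mu> - 1) * y powr (\<mu> - 1)"
    using x y by (simp add: powr_mult)
  finally have h1: "(x + y) powr (\<mu> - 1) \<le> 2 powr (\<mu> - 1) * x powr (\<mu> - 1) * y powr (\<mu> - 1)" .
  have "(x + y) powr \<mu> - x powr \<mu> \<le> \<mu> * (x + y) powr (\<mu> - 1) * y"
    by (rule powr_diff_le) (use x y mu in auto)
  also have "\<dots> \<le> \<mu> * (2 powr (\<mu> - 1) * x powr (\<mu> - 1) * y powr (\<mu> - 1)) * y"
    using h1 mu y by (intro mult_right_mono mult_left_mono) auto
  also have "\<dots> = \<mu> * 2 powr (\<mu> - 1) * x powr (\<mu> - 1) * (y powr (\<mu> - 1) * y)"
    by (simp add: mult_ac)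
  also have "y powr (\<mu> - 1) * y = y powr \<mu>"
    using y powr_add[of y "\<mu> - 1" 1] by simp
  finally have h2: "(x + y) powr \<mu> - x powr \<mu> \<le> \<mu> * 2 powr (\<mu> - 1) * x powr (\<mu> - 1) * y powr \<mu>"
    by (simp add: mult_ac)
  have "1 \<le> x powr (\<mu> - 1)" using x mu by (simp add: ge_one_powr_ge_zero)
  then have "y powr \<mu> \<le> x powr (\<mu> - 1) * y powr \<mu>"
    by (simp add: mult_le_cancel_right1)
  with h2 show ?thesis by (simp add: algebra_simps)
qed

lemma aB_bound:
  fixes x y \<mu> a A \<beta> :: real
  assumes x: "x \<ge> 1" and y: "y \<ge> 1" and mu: "\<mu> \<ge> 1" and b: "0 \<le> \<beta>" "\<beta> \<le> 1"
    and a0: "0 \<le> a" and a: "a \<le> 2 * A * (x powr \<beta> * y powr \<beta>)"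
  shows "a * ((x + y) powr \<mu> - x powr \<mu> + y powr \<mu>)
         \<le> 2 * A * (\<mu> * 2 powr (\<mu> - 1) + 1) * (x powr \<mu> * y powr (\<mu> + \<beta>))"
proof -
  define B where "B = (x + y) powr \<mu> - x powr \<mu> + y powr \<mu>"
  have "x powr \<mu> \<le> (x + y) powr \<mu>" by (rule powr_mono2) (use x y mu in auto)
  then have B0: "B \<ge> 0" by (simp add: B_def)
  have "a * B \<le> 2 * A * (x powr \<beta> * y powr \<beta>) * B" by (rule mult_right_mono[OF a B0])
  also have "\<dots> \<le> 2 * A * (x powr \<beta> * y powr \<beta>) * ((\<mu> * 2 powr (\<mu> - 1) + 1) * x powr (\<mu> - 1) * y powr \<mu>)"
    using B_bound[OF x y mu] a0 a
    by (intro mult_left_mono) (auto simp: B_def)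
  also have "\<dots> = 2 * A * (\<mu> * 2 powr (\<mu> - 1) + 1) * (x powr (\<mu> - 1 + \<beta>) * y powr (\<mu> + \<beta>))"
    using x y by (simp add: powr_add mult_ac)
  also have "\<dots> \<le> 2 * A * (\<mu> * 2 powr (\<mu> - 1) + 1) * (x powr \<mu> * y powr (\<mu> + \<beta>))"
  proof -
    have xy: "x powr \<beta> * y powr \<beta> > 0" using x y by simp
    have "0 \<le> 2 * A * (x powr \<beta> * y powr \<beta>)" using order_trans[OF a0 a] .
    then have "A \<ge> 0" using xy by (simp add: zero_le_mult_iff)
    moreover have "\<mu> * 2 powr (\<mu> - 1) + 1 > 0" using mu by (simp add: add_pos_nonneg)
    ultimately have A0: "2 * A * (\<mu> * 2 powr (\<mu> - 1) + 1) \<ge> 0" by simp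
    have "x powr (\<mu> - 1 + \<beta>) \<le> x powr \<mu>" by (rule powr_mono) (use x b in auto)
    then show ?thesis using A0 by (intro mult_left_mono mult_right_mono) auto
  qed
  finally show ?thesis by (simp add: B_def)
qed

lemma pw_key:
  fixes a K Z W1 W2 V1 V2 s0 s1 s2 e1 e2 S1 S2 :: real
  assumes a0: "a \<ge> 0" and s0: "\<bar>s0\<bar> \<le> 1" and s1: "\<bar>s1\<bar> \<le> 1" and s2: "\<bar>s2\<bar> \<le> 1"
    and e1: "s1 * e1 = \<bar>e1\<bar>" and e2: "s2 * e2 = \<bar>e2\<bar>"
    and S1: "S1 \<ge> 0" and S2: "S2 \<ge> 0" and Z: "Z \<ge> 0" and W1: "W1 \<ge> 0" and W2: "W2 \<ge> 0"
    and b1: "a * (Z - W1 + W2) \<le> K * (W1 * V2)" and b2: "a * (Z - W2 + W1) \<le> K * (W2 * V1)"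
  shows "a * (Z * s0 - W1 * s1 - W2 * s2) * ((e1 * S2 + S1 * e2) / 2)
         \<le> K / 2 * (W1 * \<bar>e1\<bar> * (V2 * S2) + W2 * \<bar>e2\<bar> * (V1 * S1))"
proof -
  have q1: "(Z * s0 - W1 * s1 - W2 * s2) * e1 \<le> (Z - W1 + W2) * \<bar>e1\<bar>"
  proof -
    have "Z * s0 * e1 \<le> Z * \<bar>e1\<bar>"
    proof -
      have "s0 * e1 \<le> \<bar>s0\<bar> * \<bar>e1\<bar>" by (metis abs_ge_self abs_mult)
      also have "\<dots> \<le> \<bar>e1\<bar>" using s0 by (intro mult_left_le_one_le) auto
      finally have "s0 * e1 \<le> \<bar>e1\<bar>" .
      then show ?thesis using Z by (simp add: mult.assoc mult_left_mono)
    qed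
    moreover have "- (W2 * s2 * e1) \<le> W2 * \<bar>e1\<bar>"
    proof -
      have "- (s2 * e1) \<le> \<bar>s2\<bar> * \<bar>e1\<bar>" by (metis abs_ge_minus_self abs_mult)
      also have "\<dots> \<le> \<bar>e1\<bar>" using s2 by (intro mult_left_le_one_le) auto
      finally have "W2 * (- (s2 * e1)) \<le> W2 * \<bar>e1\<bar>" using W2 mult_left_mono[of "- (s2 * e1)" "\<bar>e1\<bar>" W2] by simp
      then show ?thesis by (simp add: mult.assoc)
    qed
    moreover have "W1 * s1 * e1 = W1 * \<bar>e1\<bar>" using e1 by (simp add: mult.assoc)
    moreover have "(Z * s0 - W1 * s1 - W2 * s2) * e1 = Z * s0 * e1 - W1 * s1 * e1 - W2 * s2 * e1"
      by (simp add: algebra_simps)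
    moreover have "(Z - W1 + W2) * \<bar>e1\<bar> = Z * \<bar>e1\<bar> - W1 * \<bar>e1\<bar> + W2 * \<bar>e1\<bar>"
      by (simp add: algebra_simps)
    ultimately show ?thesis by linarith
  qed
  have q2: "(Z * s0 - W1 * s1 - W2 * s2) * e2 \<le> (Z - W2 + W1) * \<bar>e2\<bar>"
  proof -
    have "Z * s0 * e2 \<le> Z * \<bar>e2\<bar>"
    proof -
      have "s0 * e2 \<le> \<bar>s0\<bar> * \<bar>e2\<bar>" by (metis abs_ge_self abs_mult)
      also have "\<dots> \<le> \<bar>e2\<bar>" using s0 by (intro mult_left_le_one_le) auto
      finally have "s0 * e2 \<le> \<bar>e2\<bar>" .
      then show ?thesis using Z by (simp add: mult.assoc mult_left_mono)
    qed
    moreover have "- (W1 * s1 * e2) \<le> W1 * \<bar>e2\<bar>"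
    proof -
      have "- (s1 * e2) \<le> \<bar>s1\<bar> * \<bar>e2\<bar>" by (metis abs_ge_minus_self abs_mult)
      also have "\<dots> \<le> \<bar>e2\<bar>" using s1 by (intro mult_left_le_one_le) auto
      finally have "W1 * (- (s1 * e2)) \<le> W1 * \<bar>e2\<bar>" using W1 mult_left_mono[of "- (s1 * e2)" "\<bar>e2\<bar>" W1] by simp
      then show ?thesis by (simp add: mult.assoc)
    qed
    moreover have "W2 * s2 * e2 = W2 * \<bar>e2\<bar>" using e2 by (simp add: mult.assoc)
    moreover have "(Z * s0 - W1 * s1 - W2 * s2) * e2 = Z * s0 * e2 - W1 * s1 * e2 - W2 * s2 * e2"
      by (simp add: algebra_simps)
    moreover have "(Z - W2 + W1) * \<bar>e2\<bar> = Z * \<bar>e2\<bar> - W2 * \<bar>e2\<bar> + W1 * \<bar>e2\<bar>"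
      by (simp add: algebra_simps)
    ultimately show ?thesis by linarith
  qed
  define Q where "Q = Z * s0 - W1 * s1 - W2 * s2"
  have "a * (Q * e1 * S2) \<le> a * ((Z - W1 + W2) * \<bar>e1\<bar> * S2)"
    using q1 S2 a0 unfolding Q_def by (intro mult_left_mono mult_right_mono) auto
  also have "\<dots> = (a * (Z - W1 + W2)) * (\<bar>e1\<bar> * S2)" by (simp add: mult_ac)
  also have "\<dots> \<le> K * (W1 * V2) * (\<bar>e1\<bar> * S2)"
    using b1 S2 by (intro mult_right_mono) auto
  finally have r1: "a * (Q * e1 * S2) \<le> K * (W1 * V2) * (\<bar>e1\<bar> * S2)" .
  have "a * (Q * e2 * S1) \<le> a * ((Z - W2 + W1) * \<bar>e2\<bar> * S1)"
    using q2 S1 a0 unfolding Q_def by (intro mult_left_mono mult_right_mono) auto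
  also have "\<dots> = (a * (Z - W2 + W1)) * (\<bar>e2\<bar> * S1)" by (simp add: mult_ac)
  also have "\<dots> \<le> K * (W2 * V1) * (\<bar>e2\<bar> * S1)"
    using b2 S1 by (intro mult_right_mono) auto
  finally have r2: "a * (Q * e2 * S1) \<le> K * (W2 * V1) * (\<bar>e2\<bar> * S1)" .
  have "a * Q * ((e1 * S2 + S1 * e2) / 2) = (a * (Q * e1 * S2) + a * (Q * e2 * S1)) / 2"
    by (simp add: algebra_simps)
  also have "\<dots> \<le> (K * (W1 * V2) * (\<bar>e1\<bar> * S2) + K * (W2 * V1) * (\<bar>e2\<bar> * S1)) / 2"
    using r1 r2 by simp
  also have "\<dots> = K / 2 * (W1 * \<bar>e1\<bar> * (V2 * S2) + W2 * \<bar>e2\<bar> * (V1 * S1))"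
    by (simp add: algebra_simps)
  finally show ?thesis by (simp add: Q_def)
qed

lemma main_estimate:
  fixes a :: "nat \<Rightarrow> nat \<Rightarrow> real" and r s :: "nat \<Rightarrow> real" and A R \<beta> \<mu> :: real
    and C Dd \<sigma> y :: "nat \<Rightarrow> real"
  assumes A: "A > 0" and b: "0 \<le> \<beta>" "\<beta> \<le> 1" and mu: "\<mu> \<ge> 1"
    and a_sym: "\<And>k l. k \<ge> 1 \<Longrightarrow> l \<ge> 1 \<Longrightarrow> a k l = a l k"
    and a_nn: "\<And>k l. k \<ge> 1 \<Longrightarrow> l \<ge> 1 \<Longrightarrow> 0 \<le> a k l"
    and a_le: "\<And>k l. k \<ge> 1 \<Longrightarrow> l \<ge> 1 \<Longrightarrow> a k l \<le> 2 * A * (real k powr \<beta> * real l powr \<beta>)"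
    and rR: "\<And>k. k \<ge> 1 \<Longrightarrow> r k \<ge> R"
    and C0: "\<And>k. k \<ge> 1 \<Longrightarrow> C k \<ge> 0" and D0: "\<And>k. k \<ge> 1 \<Longrightarrow> Dd k \<ge> 0"
    and sC: "summable (\<lambda>k. real (Suc k) powr (\<mu> + \<beta>) * C (Suc k))"
    and sD: "summable (\<lambda>k. real (Suc k) powr (\<mu> + \<beta>) * Dd (Suc k))"
    and sg1: "\<And>k. \<bar>\<sigma> k\<bar> \<le> 1" and sg2: "\<And>k. \<sigma> k * (C k - Dd k) = \<bar>C k - Dd k\<bar>"
    and sy: "summable (\<lambda>k. real (Suc k) powr \<mu> * \<bar>y (Suc k)\<bar>)"
    and y: "\<And>k. k \<ge> 1 \<Longrightarrow> y k =
       ((1/2) * (\<Sum>l=1..k-1. a (k-l) l * C (k-l) * C l) - C k * (\<Sum>l. a k (Suc l) * C (Suc l)) + s k - r k * C k)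
     - ((1/2) * (\<Sum>l=1..k-1. a (k-l) l * Dd (k-l) * Dd l) - Dd k * (\<Sum>l. a k (Suc l) * Dd (Suc l)) + s k - r k * Dd k)"
  shows "(\<Sum>k. real (Suc k) powr \<mu> * (\<sigma> (Suc k) * y (Suc k)))
    \<le> (A * (\<mu> * 2 powr (\<mu> - 1) + 1) * (\<Sum>l. real (Suc l) powr (\<mu> + \<beta>) * (C (Suc l) + Dd (Suc l))) - R)
       * (\<Sum>k. real (Suc k) powr \<mu> * \<bar>C (Suc k) - Dd (Suc k)\<bar>)"
proof -
  define I where "I = {1::nat..}"
  define P where "P = I \<times> I"
  define W where "W i = real i powr \<mu>" for i
  define V where "V i = real i powr (\<mu> + \<beta>)" for i
  define E where "E i = C i - Dd i" for i
  define S where "S i = C i + Dd i" for i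
  define X where "X i j = C i * C j - Dd i * Dd j" for i j
  define K where "K = 2 * A * (\<mu> * 2 powr (\<mu> - 1) + 1)"
  define KD where "KD = 2 * A * 2 powr \<mu>"
  have Iff: "i \<in> I \<longleftrightarrow> i \<ge> 1" for i by (simp add: I_def)
  have W1: "1 \<le> W i" if "i \<in> I" for i
    using that mu by (simp add: W_def Iff ge_one_powr_ge_zero)
  have WV: "W i \<le> V i" if "i \<in> I" for i
    unfolding W_def V_def by (rule powr_mono) (use that b in \<open>auto simp: Iff\<close>)
  have V0: "0 \<le> V i" for i by (simp add: V_def)
  have C0': "C i \<ge> 0" "Dd i \<ge> 0" "S i \<ge> 0" if "i \<in> I" for i
    using C0 D0 that by (auto simp: Iff S_def)
  have sVC: "(\<lambda>i. V i * C i) summable_on I" "(\<Sum>k. V (Suc k) * C (Suc k)) = infsum (\<lambda>i. V i * C i) I"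
    using shift_infsum[of "\<lambda>i. V i * C i"] sC C0 by (auto simp: I_def V_def abs_mult)
  have sVD: "(\<lambda>i. V i * Dd i) summable_on I" "(\<Sum>k. V (Suc k) * Dd (Suc k)) = infsum (\<lambda>i. V i * Dd i) I"
    using shift_infsum[of "\<lambda>i. V i * Dd i"] sD D0 by (auto simp: I_def V_def abs_mult)
  have sVS: "(\<lambda>i. V i * S i) summable_on I"
    using summable_on_add[OF sVC(1) sVD(1)] by (simp add: S_def algebra_simps)
  have Meq: "(\<Sum>l. real (Suc l) powr (\<mu> + \<beta>) * (C (Suc l) + Dd (Suc l))) = infsum (\<lambda>i. V i * S i) I"
  proof -
    have "(\<Sum>l. real (Suc l) powr (\<mu> + \<beta>) * (C (Suc l) + Dd (Suc l)))
        = (\<Sum>k. V (Suc k) * C (Suc k)) + (\<Sum>k. V (Suc k) * Dd (Suc k))"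
      using suminf_add[OF sC sD] by (simp add: V_def algebra_simps)
    also have "\<dots> = infsum (\<lambda>i. V i * C i + V i * Dd i) I"
      using sVC sVD by (simp add: infsum_add)
    finally show ?thesis by (simp add: S_def algebra_simps)
  qed
  have ES: "\<bar>E i\<bar> \<le> S i" if "i \<in> I" for i
    using C0'[OF that] by (simp add: E_def S_def)
  have WE0: "0 \<le> W i * \<bar>E i\<bar>" for i by (simp add: W_def)
  have sWE: "(\<lambda>i. W i * \<bar>E i\<bar>) summable_on I"
  proof (rule summable_on_comparison_test[OF sVS])
    fix i assume i: "i \<in> I"
    show "W i * \<bar>E i\<bar> \<le> V i * S i"
      by (rule mult_mono) (use WV[OF i] ES[OF i] V0 W1[OF i] in auto)
  qed (rule WE0)
  have Neq: "(\<Sum>k. real (Suc k) powr \<mu> * \<bar>C (Suc k) - Dd (Suc k)\<bar>) = infsum (\<lambda>i. W i * \<bar>E i\<bar>) I"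
  proof -
    have "summable (\<lambda>k. \<bar>W (Suc k) * \<bar>E (Suc k)\<bar>\<bar>)"
    proof (rule summable_comparison_test'[OF summable_add[OF sC sD]])
      fix n :: nat
      have i: "Suc n \<in> I" by (simp add: Iff)
      have "W (Suc n) * \<bar>E (Suc n)\<bar> \<le> V (Suc n) * S (Suc n)"
        by (rule mult_mono) (use WV[OF i] ES[OF i] V0 W1[OF i] in auto)
      then show "norm \<bar>W (Suc n) * \<bar>E (Suc n)\<bar>\<bar> \<le> real (Suc n) powr (\<mu> + \<beta>) * C (Suc n) + real (Suc n) powr (\<mu> + \<beta>) * Dd (Suc n)"
        using WE0[of "Suc n"] by (simp add: V_def S_def algebra_simps)
    qed
    from shift_infsum(1)[OF this] show ?thesis by (simp add: I_def W_def E_def)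
  qed
  define Dom where "Dom = (\<lambda>(i, j). V i * C i * (V j * C j) + V i * Dd i * (V j * Dd j))"
  have sDom: "Dom summable_on P"
  proof -
    have "(\<lambda>p. (\<lambda>(x, y). V x * C x * (V y * C y)) p + (\<lambda>(x, y). V x * Dd x * (V y * Dd y)) p) summable_on P"
      unfolding P_def
      by (intro summable_on_add prod_summable(1) sVC(1) sVD(1)) (use V0 C0' in auto)
    moreover have "Dom = (\<lambda>p. (\<lambda>(x, y). V x * C x * (V y * C y)) p + (\<lambda>(x, y). V x * Dd x * (V y * Dd y)) p)"
      by (auto simp: Dom_def fun_eq_iff)
    ultimately show ?thesis by simp
  qed
  have aij: "0 \<le> a i j" "a i j \<le> 2 * A * (real i powr \<beta> * real j powr \<beta>)" if "i \<in> I" "j \<in> I" for i j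
    using a_nn a_le that by (auto simp: Iff)
  have Zb: "real (i + j) powr \<mu> \<le> 2 powr \<mu> * (W i * W j)" if "i \<in> I" "j \<in> I" for i j
  proof -
    have "real (i + j) powr \<mu> \<le> (2 * (real i * real j)) powr \<mu>"
      by (rule powr_mono2) (use mu sum_le_2prod[of "real i" "real j"] that in \<open>auto simp: Iff\<close>)
    also have "\<dots> = 2 powr \<mu> * (W i * W j)" by (simp add: W_def powr_mult)
    finally show ?thesis .
  qed
  have WZ: "W i \<le> real (i + j) powr \<mu>" "W j \<le> real (i + j) powr \<mu>" if "i \<in> I" "j \<in> I" for i j
    unfolding W_def by (rule powr_mono2, use mu that in \<open>auto simp: Iff\<close>)+
  have Xb: "\<bar>X i j\<bar> \<le> C i * C j + Dd i * Dd j" if "i \<in> I" "j \<in> I" for i j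
  proof -
    have "0 \<le> C i * C j" "0 \<le> Dd i * Dd j" using C0'[OF that(1)] C0'[OF that(2)] by auto
    then show ?thesis by (simp add: X_def)
  qed
  have VW: "V i = real i powr \<beta> * W i" for i by (simp add: V_def W_def powr_add mult.commute)
  have domb: "a i j * real (i + j) powr \<mu> * \<bar>X i j\<bar> \<le> KD * Dom (i, j)" if ij: "i \<in> I" "j \<in> I" for i j
  proof -
    have "a i j * real (i + j) powr \<mu> * \<bar>X i j\<bar>
        \<le> (2 * A * (real i powr \<beta> * real j powr \<beta>)) * (2 powr \<mu> * (W i * W j)) * (C i * C j + Dd i * Dd j)"
      by (intro mult_mono aij[OF ij] Zb[OF ij] Xb[OF ij]) (use A aij[OF ij] C0'[OF ij(1)] C0'[OF ij(2)] in \<open>auto simp: W_def\<close>)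
    also have "\<dots> = KD * Dom (i, j)"
      by (simp add: KD_def Dom_def VW algebra_simps)
    finally show ?thesis .
  qed
  define f1 where "f1 = (\<lambda>(i, j). 1/2 * a i j * real (i + j) powr \<mu> * \<sigma> (i + j) * X i j)"
  define f2 where "f2 = (\<lambda>(i, j). a i j * W i * \<sigma> i * X i j)"
  have sKD: "(\<lambda>p. KD * Dom p) summable_on P" by (rule summable_on_cmult_right[OF sDom])
  have Dom0: "Dom p \<ge> 0" if "p \<in> P" for p
    using that V0 C0' by (auto simp: Dom_def P_def)
  have KD0: "KD \<ge> 0" using A by (simp add: KD_def)
  have sf1: "f1 summable_on P"
  proof -
    have "(\<lambda>p. norm (f1 p)) summable_on P"
    proof (rule Infinite_Sum.abs_summable_on_comparison_test'[OF sKD])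
      fix p assume p: "p \<in> P"
      then obtain i j where pij: "p = (i, j)" "i \<in> I" "j \<in> I" by (auto simp: P_def)
      have "\<bar>f1 p\<bar> = 1/2 * a i j * real (i + j) powr \<mu> * \<bar>\<sigma> (i + j)\<bar> * \<bar>X i j\<bar>"
        using aij[OF pij(2,3)] by (simp add: f1_def pij abs_mult)
      also have "\<dots> \<le> a i j * real (i + j) powr \<mu> * 1 * \<bar>X i j\<bar>"
        using aij[OF pij(2,3)] sg1[of "i+j"]
        by (intro mult_mono) auto
      also have "\<dots> \<le> KD * Dom p" using domb[OF pij(2,3)] by (simp add: pij)
      finally show "norm (f1 p) \<le> KD * Dom p" by simp
    qed
    then show ?thesis using summable_on_iff_abs_summable_on_real[of f1 P] by simp
  qed
  have sf2: "f2 summable_on P"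
  proof -
    have "(\<lambda>p. norm (f2 p)) summable_on P"
    proof (rule Infinite_Sum.abs_summable_on_comparison_test'[OF sKD])
      fix p assume p: "p \<in> P"
      then obtain i j where pij: "p = (i, j)" "i \<in> I" "j \<in> I" by (auto simp: P_def)
      have "\<bar>f2 p\<bar> = a i j * W i * \<bar>\<sigma> i\<bar> * \<bar>X i j\<bar>"
        using aij[OF pij(2,3)] by (simp add: f2_def pij abs_mult W_def)
      also have "\<dots> \<le> a i j * real (i + j) powr \<mu> * 1 * \<bar>X i j\<bar>"
        using aij[OF pij(2,3)] sg1[of i] WZ[OF pij(2,3)] W1[OF pij(2)]
        by (intro mult_mono) auto
      also have "\<dots> \<le> KD * Dom p" using domb[OF pij(2,3)] by (simp add: pij)
      finally show "norm (f2 p) \<le> KD * Dom p" by simp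
    qed
    then show ?thesis using summable_on_iff_abs_summable_on_real[of f2 P] by simp
  qed
  define Bk where "Bk k = {1..k - 1}" for k :: nat
  define jm where "jm = (\<lambda>(k::nat, l::nat). (k - l, l))"
  define im where "im = (\<lambda>(p::nat, q::nat). (p + q, q))"
  have w1: "im (jm z) = z" if "z \<in> Sigma I Bk" for z
    using that by (auto simp: im_def jm_def Bk_def Iff)
  have w2: "jm z \<in> P" if "z \<in> Sigma I Bk" for z
    using that by (auto simp: P_def jm_def Bk_def Iff)
  have w3: "jm (im z) = z" if "z \<in> P" for z
    using that by (auto simp: im_def jm_def split: prod.splits)
  have w4: "im z \<in> Sigma I Bk" if "z \<in> P" for z
    using that by (auto simp: P_def im_def Bk_def Iff)
  have sg: "(\<lambda>z. f1 (jm z)) summable_on Sigma I Bk"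
    using summable_on_reindex_bij_witness[of "Sigma I Bk" im jm P f1 "\<lambda>z. f1 (jm z)", OF w1 w2 w3 w4] sf1
    by simp
  have ig: "infsum (\<lambda>z. f1 (jm z)) (Sigma I Bk) = infsum f1 P"
    using infsum_reindex_bij_witness[of "Sigma I Bk" im jm P f1 "\<lambda>z. f1 (jm z)", OF w1 w2 w3 w4]
    by simp
  define gfun where "gfun k = infsum (\<lambda>l. f1 (jm (k, l))) (Bk k)" for k
  have eta1: "(\<lambda>(x, y). f1 (jm (x, y))) = (\<lambda>z. f1 (jm z))" by (auto simp: fun_eq_iff)
  have sg': "(\<lambda>(x, y). f1 (jm (x, y))) summable_on Sigma I Bk"
    using sg eta1 by simp
  have sgf: "gfun summable_on I"
    using summable_on_Sigma_banach[OF sg'] by (simp add: gfun_def[abs_def])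
  have igf: "infsum gfun I = infsum f1 P"
    using infsum_Sigma'_banach[OF sg'] ig eta1 by (simp add: gfun_def[abs_def])
  define G where "G k = (1/2) * (\<Sum>l=1..k-1. a (k-l) l * C (k-l) * C l) - (1/2) * (\<Sum>l=1..k-1. a (k-l) l * Dd (k-l) * Dd l)" for k
  have gfun_eq: "gfun k = W k * \<sigma> k * G k" if "k \<in> I" for k
  proof -
    have "gfun k = (\<Sum>l=1..k-1. W k * \<sigma> k * ((1/2) * (a (k-l) l * C (k-l) * C l) - (1/2) * (a (k-l) l * Dd (k-l) * Dd l)))"
      unfolding gfun_def Bk_def
      by (simp, rule sum.cong) (auto simp: f1_def jm_def X_def W_def field_simps)
    also have "\<dots> = W k * \<sigma> k * G k"
      by (simp add: G_def sum_distrib_left[symmetric] sum_subtractf sum_divide_distrib[symmetric])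
    finally show ?thesis .
  qed
  define Lc where "Lc i = (\<Sum>l. a i (Suc l) * C (Suc l))" for i
  define Ld where "Ld i = (\<Sum>l. a i (Suc l) * Dd (Suc l))" for i
  have sLc: "(\<lambda>j. a i j * C j) summable_on I" "Lc i = infsum (\<lambda>j. a i j * C j) I"
       and sLd: "(\<lambda>j. a i j * Dd j) summable_on I" "Ld i = infsum (\<lambda>j. a i j * Dd j) I" if i: "i \<in> I" for i
  proof -
    have bnd: "\<bar>a i (Suc l) * F (Suc l)\<bar> \<le> (2 * A * real i powr \<beta>) * (real (Suc l) powr (\<mu> + \<beta>) * F (Suc l))"
      if F: "\<And>k. k \<ge> 1 \<Longrightarrow> F k \<ge> 0" for F l
    proof -
      have l: "Suc l \<in> I" by (simp add: Iff)
      have "\<bar>a i (Suc l) * F (Suc l)\<bar> = a i (Suc l) * F (Suc l)"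
        using aij(1)[OF i l] F[of "Suc l"] by simp
      also have "\<dots> \<le> (2 * A * (real i powr \<beta> * real (Suc l) powr \<beta>)) * F (Suc l)"
        by (rule mult_right_mono[OF aij(2)[OF i l]]) (use F in auto)
      also have "\<dots> \<le> (2 * A * (real i powr \<beta> * real (Suc l) powr (\<mu> + \<beta>))) * F (Suc l)"
        using A F[of "Suc l"] mu
        by (intro mult_right_mono mult_left_mono powr_mono) auto
      finally show ?thesis by (simp add: mult_ac)
    qed
    have "summable (\<lambda>l. \<bar>a i (Suc l) * C (Suc l)\<bar>)"
      by (rule summable_comparison_test'[OF summable_mult[OF sC]]) (use bnd[of C] C0 in auto)
    from shift_infsum[OF this]
    show "(\<lambda>j. a i j * C j) summable_on I" "Lc i = infsum (\<lambda>j. a i j * C j) I"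
      by (simp_all add: Lc_def I_def)
    have "summable (\<lambda>l. \<bar>a i (Suc l) * Dd (Suc l)\<bar>)"
      by (rule summable_comparison_test'[OF summable_mult[OF sD]]) (use bnd[of Dd] D0 in auto)
    from shift_infsum[OF this]
    show "(\<lambda>j. a i j * Dd j) summable_on I" "Ld i = infsum (\<lambda>j. a i j * Dd j) I"
      by (simp_all add: Ld_def I_def)
  qed
  define lfun where "lfun i = infsum (\<lambda>j. f2 (i, j)) I" for i
  have sf2': "(\<lambda>(x, y). f2 (x, y)) summable_on Sigma I (\<lambda>_. I)"
  proof -
    have "(\<lambda>(x, y). f2 (x, y)) = f2" by (auto simp: fun_eq_iff)
    then show ?thesis using sf2 by (simp add: P_def)
  qed
  have slf: "lfun summable_on I"
    using summable_on_Sigma_banach[OF sf2'] by (simp add: lfun_def[abs_def])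
  have ilf: "infsum lfun I = infsum f2 P"
    using infsum_Sigma'_banach[OF sf2'] by (simp add: lfun_def[abs_def] P_def)
  have lfun_eq: "lfun i = W i * \<sigma> i * (C i * Lc i - Dd i * Ld i)" if i: "i \<in> I" for i
  proof -
    have "lfun i = infsum (\<lambda>j. W i * \<sigma> i * (C i * (a i j * C j) - Dd i * (a i j * Dd j))) I"
      unfolding lfun_def by (rule infsum_cong) (simp add: f2_def X_def algebra_simps)
    also have "\<dots> = W i * \<sigma> i * infsum (\<lambda>j. C i * (a i j * C j) - Dd i * (a i j * Dd j)) I"
      by (rule infsum_cmult_right, rule infsum_diff_real(2))
         (intro summable_on_cmult_right sLc(1)[OF i] sLd(1)[OF i])+
    also have "infsum (\<lambda>j. C i * (a i j * C j) - Dd i * (a i j * Dd j)) I = C i * Lc i - Dd i * Ld i"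
      by (subst infsum_diff_real(1)) (auto intro!: summable_on_cmult_right sLc[OF i] sLd[OF i] simp: infsum_cmult_right' sLc(2)[OF i] sLd(2)[OF i])
    finally show ?thesis .
  qed
  have ydec: "W k * (\<sigma> k * y k) = gfun k - lfun k - W k * r k * \<bar>E k\<bar>" if k: "k \<in> I" for k
  proof -
    have "y k = G k - (C k * Lc k - Dd k * Ld k) - r k * E k"
      using y[of k] k by (simp add: Iff G_def Lc_def Ld_def E_def algebra_simps)
    then have "W k * (\<sigma> k * y k) = W k * (\<sigma> k * (G k - (C k * Lc k - Dd k * Ld k) - r k * E k))"
      by simp
    also have "\<dots> = W k * \<sigma> k * G k - W k * \<sigma> k * (C k * Lc k - Dd k * Ld k) - W k * r k * (\<sigma> k * E k)"
      by (simp add: algebra_simps)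
    finally have "W k * (\<sigma> k * y k) = W k * \<sigma> k * G k - W k * \<sigma> k * (C k * Lc k - Dd k * Ld k) - W k * r k * (\<sigma> k * E k)" .
    then show ?thesis using sg2[of k] gfun_eq[OF k] lfun_eq[OF k] by (simp add: E_def)
  qed
  have sWy: "summable (\<lambda>k. \<bar>W (Suc k) * (\<sigma> (Suc k) * y (Suc k))\<bar>)"
  proof (rule summable_comparison_test'[OF sy])
    fix n :: nat
    have "\<bar>W (Suc n) * (\<sigma> (Suc n) * y (Suc n))\<bar> = W (Suc n) * (\<bar>\<sigma> (Suc n)\<bar> * \<bar>y (Suc n)\<bar>)"
      by (simp add: abs_mult W_def)
    also have "\<dots> \<le> W (Suc n) * (1 * \<bar>y (Suc n)\<bar>)"
      using sg1[of "Suc n"] by (intro mult_left_mono mult_right_mono) (auto simp: W_def)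
    finally show "norm \<bar>W (Suc n) * (\<sigma> (Suc n) * y (Suc n))\<bar> \<le> real (Suc n) powr \<mu> * \<bar>y (Suc n)\<bar>"
      by (simp add: W_def)
  qed
  note shD = shift_infsum[OF sWy]
  have Deq: "(\<Sum>k. real (Suc k) powr \<mu> * (\<sigma> (Suc k) * y (Suc k))) = infsum (\<lambda>k. W k * (\<sigma> k * y k)) I"
    using shD(1) by (simp add: W_def I_def)
  have sWyI: "(\<lambda>k. W k * (\<sigma> k * y k)) summable_on I" using shD(2) by (simp add: I_def)
  have sWrE: "(\<lambda>k. W k * r k * \<bar>E k\<bar>) summable_on I"
  proof -
    have "(\<lambda>k. (gfun k - lfun k) - W k * (\<sigma> k * y k)) summable_on I"
      by (intro infsum_diff_real(2) sgf slf sWyI)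
    moreover have "(\<lambda>k. W k * r k * \<bar>E k\<bar>) summable_on I \<longleftrightarrow> (\<lambda>k. (gfun k - lfun k) - W k * (\<sigma> k * y k)) summable_on I"
      by (rule summable_on_cong) (simp add: ydec)
    ultimately show ?thesis by simp
  qed
  have Deq2: "infsum (\<lambda>k. W k * (\<sigma> k * y k)) I = (infsum f1 P - infsum f2 P) - infsum (\<lambda>k. W k * r k * \<bar>E k\<bar>) I"
  proof -
    have "infsum (\<lambda>k. W k * (\<sigma> k * y k)) I = infsum (\<lambda>k. (gfun k - lfun k) - W k * r k * \<bar>E k\<bar>) I"
      by (rule infsum_cong) (simp add: ydec)
    also have "\<dots> = (infsum gfun I - infsum lfun I) - infsum (\<lambda>k. W k * r k * \<bar>E k\<bar>) I"
      by (simp add: infsum_diff_real sgf slf sWrE)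
    finally show ?thesis by (simp add: igf ilf)
  qed
  have rb: "R * infsum (\<lambda>i. W i * \<bar>E i\<bar>) I \<le> infsum (\<lambda>k. W k * r k * \<bar>E k\<bar>) I"
  proof -
    have "R * infsum (\<lambda>i. W i * \<bar>E i\<bar>) I = infsum (\<lambda>i. R * (W i * \<bar>E i\<bar>)) I"
      by (simp add: infsum_cmult_right')
    also have "\<dots> \<le> infsum (\<lambda>k. W k * r k * \<bar>E k\<bar>) I"
    proof (rule infsum_mono)
      show "(\<lambda>i. R * (W i * \<bar>E i\<bar>)) summable_on I" by (rule summable_on_cmult_right[OF sWE])
      show "(\<lambda>k. W k * r k * \<bar>E k\<bar>) summable_on I" by (rule sWrE)
      fix k assume k: "k \<in> I"
      have "R * (W k * \<bar>E k\<bar>) \<le> r k * (W k * \<bar>E k\<bar>)"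
        by (rule mult_right_mono) (use rR k WE0 in \<open>auto simp: Iff\<close>)
      then show "R * (W k * \<bar>E k\<bar>) \<le> W k * r k * \<bar>E k\<bar>" by (simp add: mult_ac)
    qed
    finally show ?thesis .
  qed
  \<comment> \<open>symmetrization\<close>
  define F where "F p = f1 p - f2 p" for p
  have sF: "F summable_on P" using infsum_diff_real(2)[OF sf1 sf2] by (simp add: F_def[abs_def])
  have iF: "infsum F P = infsum f1 P - infsum f2 P" using infsum_diff_real(1)[OF sf1 sf2] by (simp add: F_def[abs_def])
  define F' where "F' = (\<lambda>(x, y). F (y, x))"
  have hF': "(F' has_sum infsum F P) P"
    using has_sum_swap[where f=F and S="infsum F P" and A=I and B=I] has_sum_infsum[OF sF] by (simp add: P_def F'_def)
  define N where "N = infsum (\<lambda>i. W i * \<bar>E i\<bar>) I"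
  define M where "M = infsum (\<lambda>i. V i * S i) I"
  define H where "H = (\<lambda>(i, j). K / 2 * (W i * \<bar>E i\<bar> * (V j * S j) + V i * S i * (W j * \<bar>E j\<bar>)))"
  have hH: "(H has_sum (K / 2 * (N * M + M * N))) P"
  proof -
    have p1: "((\<lambda>(x, y). W x * \<bar>E x\<bar> * (V y * S y)) has_sum (N * M)) P"
      using prod_summable[OF sWE sVS] WE0 V0 C0' unfolding P_def N_def M_def
      by (auto simp: has_sum_iff)
    have p2: "((\<lambda>(x, y). V x * S x * (W y * \<bar>E y\<bar>)) has_sum (M * N)) P"
      using prod_summable[OF sVS sWE] WE0 V0 C0' unfolding P_def N_def M_def
      by (auto simp: has_sum_iff)
    have "((\<lambda>p. K / 2 * ((\<lambda>(x, y). W x * \<bar>E x\<bar> * (V y * S y)) p + (\<lambda>(x, y). V x * S x * (W y * \<bar>E y\<bar>)) p))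
          has_sum (K / 2 * (N * M + M * N))) P"
      by (intro has_sum_cmult_right has_sum_add p1 p2)
    moreover have "(\<lambda>p. K / 2 * ((\<lambda>(x, y). W x * \<bar>E x\<bar> * (V y * S y)) p + (\<lambda>(x, y). V x * S x * (W y * \<bar>E y\<bar>)) p)) = H"
      by (auto simp: H_def fun_eq_iff)
    ultimately show ?thesis by simp
  qed
  have pw: "F p + F' p \<le> H p" if p: "p \<in> P" for p
  proof -
    obtain i j where pij: "p = (i, j)" and ij: "i \<in> I" "j \<in> I" using p by (auto simp: P_def)
    define Z where "Z = real (i + j) powr \<mu>"
    have aji: "a j i = a i j" using a_sym ij by (simp add: Iff)
    have eq: "F p + F' p = a i j * (Z * \<sigma> (i + j) - W i * \<sigma> i - W j * \<sigma> j) * ((E i * S j + S i * E j) / 2)"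
      by (simp add: pij F_def F'_def f1_def f2_def aji add.commute[of j i] Z_def X_def E_def S_def field_simps)
    have b1: "a i j * (Z - W i + W j) \<le> K * (W i * V j)"
      using aB_bound[of "real i" "real j" \<mu> \<beta> "a i j" A] aij[OF ij] ij mu b
      by (simp add: Iff Z_def W_def V_def K_def mult_ac)
    have b2: "a i j * (Z - W j + W i) \<le> K * (W j * V i)"
      using aB_bound[of "real j" "real i" \<mu> \<beta> "a j i" A] aij[OF ij(2) ij(1)] ij mu b aji
      by (simp add: Iff Z_def W_def V_def K_def mult_ac add.commute[of j i] add.commute[of "real j" "real i"])
    have "a i j * (Z * \<sigma> (i + j) - W i * \<sigma> i - W j * \<sigma> j) * ((E i * S j + S i * E j) / 2)
        \<le> K / 2 * (W i * \<bar>E i\<bar> * (V j * S j) + W j * \<bar>E j\<bar> * (V i * S i))"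
      by (rule pw_key[OF aij(1)[OF ij] sg1 sg1 sg1 _ _ C0'(3)[OF ij(1)] C0'(3)[OF ij(2)] _ _ _ b1 b2])
         (use sg2 ij in \<open>auto simp: E_def Z_def W_def\<close>)
    then show ?thesis using eq by (simp add: pij H_def mult_ac)
  qed
  have "infsum F P + infsum F' P \<le> infsum H P"
  proof -
    have "infsum F P + infsum F' P = infsum (\<lambda>p. F p + F' p) P"
      by (rule infsum_add[symmetric]) (use sF hF' in \<open>auto simp: has_sum_iff\<close>)
    also have "\<dots> \<le> infsum H P"
      by (rule infsum_mono) (use sF hF' hH pw in \<open>auto simp: has_sum_iff intro: summable_on_add\<close>)
    finally show ?thesis .
  qed
  then have Fb: "infsum F P \<le> K / 2 * (N * M)"
    using hF' hH by (simp add: has_sum_iff mult.commute[of M N])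
  have N0: "N \<ge> 0" unfolding N_def by (rule infsum_nonneg) (rule WE0)
  have "infsum (\<lambda>k. W k * (\<sigma> k * y k)) I \<le> K / 2 * (N * M) - R * N"
    using Deq2 iF Fb rb by (simp add: N_def)
  also have "\<dots> = (A * (\<mu> * 2 powr (\<mu> - 1) + 1) * M - R) * N"
    by (simp add: K_def algebra_simps)
  finally show ?thesis using Deq Meq Neq by (simp add: M_def N_def)
qed

lemma quot_facts:
  fixes c c' :: "nat \<Rightarrow> real \<Rightarrow> real" and \<mu> t :: real
  assumes ws: "\<And>\<tau>. \<tau> > 0 \<Longrightarrow> wsummable \<mu> (\<lambda>k. c k \<tau>)" and wsc': "wsummable \<mu> (\<lambda>k. c' k t)"
    and t: "t > 0" and mu: "\<mu> \<ge> 0"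
    and lim: "((\<lambda>h. wnorm \<mu> (\<lambda>k. (c k h - c k t) / (h - t) - c' k t)) \<longlongrightarrow> 0) (at t)"
  shows "\<And>h. h > 0 \<Longrightarrow> summable (\<lambda>m. real (Suc m) powr \<mu> * \<bar>(c (Suc m) h - c (Suc m) t) / (h - t) - c' (Suc m) t\<bar>)"
    and "\<And>k. k \<ge> 1 \<Longrightarrow> ((\<lambda>h. (c k h - c k t) / (h - t)) \<longlongrightarrow> c' k t) (at t)"
proof -
  show sq: "summable (\<lambda>m. real (Suc m) powr \<mu> * \<bar>(c (Suc m) h - c (Suc m) t) / (h - t) - c' (Suc m) t\<bar>)"
    if h: "h > 0" for h
  proof -
    define w where "w m = real (Suc m) powr \<mu>" for m
    have s1: "summable (\<lambda>m. w m * \<bar>c (Suc m) h\<bar>)" using ws[OF h] by (simp add: wsummable_def w_def)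
    have s2: "summable (\<lambda>m. w m * \<bar>c (Suc m) t\<bar>)" using ws[OF t] by (simp add: wsummable_def w_def)
    have s3: "summable (\<lambda>m. w m * \<bar>c' (Suc m) t\<bar>)" using wsc' by (simp add: wsummable_def w_def)
    have "summable (\<lambda>m. (w m * \<bar>c (Suc m) h\<bar>) / \<bar>h - t\<bar> + (w m * \<bar>c (Suc m) t\<bar>) / \<bar>h - t\<bar> + w m * \<bar>c' (Suc m) t\<bar>)"
      by (intro summable_add summable_divide s1 s2 s3)
    then show ?thesis
    proof (rule summable_comparison_test'[where N=0])
      fix m :: nat
      have w0: "w m \<ge> 0" by (simp add: w_def)
      have "\<bar>(c (Suc m) h - c (Suc m) t) / (h - t) - c' (Suc m) t\<bar>
            \<le> \<bar>c (Suc m) h\<bar> / \<bar>h - t\<bar> + \<bar>c (Suc m) t\<bar> / \<bar>h - t\<bar> + \<bar>c' (Suc m) t\<bar>"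
      proof -
        have "\<bar>(c (Suc m) h - c (Suc m) t) / (h - t) - c' (Suc m) t\<bar>
              \<le> \<bar>(c (Suc m) h - c (Suc m) t) / (h - t)\<bar> + \<bar>c' (Suc m) t\<bar>" by (rule abs_triangle_ineq4)
        also have "\<bar>(c (Suc m) h - c (Suc m) t) / (h - t)\<bar> \<le> \<bar>c (Suc m) h\<bar> / \<bar>h - t\<bar> + \<bar>c (Suc m) t\<bar> / \<bar>h - t\<bar>"
          by (simp add: abs_divide add_divide_distrib[symmetric] divide_right_mono abs_triangle_ineq4)
        finally show ?thesis by simp
      qed
      then have "w m * \<bar>(c (Suc m) h - c (Suc m) t) / (h - t) - c' (Suc m) t\<bar>
          \<le> w m * (\<bar>c (Suc m) h\<bar> / \<bar>h - t\<bar> + \<bar>c (Suc m) t\<bar> / \<bar>h - t\<bar> + \<bar>c' (Suc m) t\<bar>)"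
        by (rule mult_left_mono) (rule w0)
      then show "norm (real (Suc m) powr \<mu> * \<bar>(c (Suc m) h - c (Suc m) t) / (h - t) - c' (Suc m) t\<bar>)
          \<le> w m * \<bar>c (Suc m) h\<bar> / \<bar>h - t\<bar> + w m * \<bar>c (Suc m) t\<bar> / \<bar>h - t\<bar> + w m * \<bar>c' (Suc m) t\<bar>"
        using w0 by (simp add: w_def algebra_simps)
    qed
  qed
  fix k :: nat assume k: "k \<ge> 1"
  then obtain m where km: "k = Suc m" by (cases k) auto
  have ev: "eventually (\<lambda>h. h > 0) (at t)"
    using order_tendstoD(1)[OF tendsto_ident_at t] by simp
  have "((\<lambda>h. (c k h - c k t) / (h - t) - c' k t) \<longlongrightarrow> 0) (at t)"
  proof (rule Lim_null_comparison[OF _ lim])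
    show "\<forall>\<^sub>F h in at t. norm ((c k h - c k t) / (h - t) - c' k t)
             \<le> wnorm \<mu> (\<lambda>k. (c k h - c k t) / (h - t) - c' k t)"
      using ev
    proof eventually_elim
      case (elim h)
      let ?f = "\<lambda>m. real (Suc m) powr \<mu> * \<bar>(c (Suc m) h - c (Suc m) t) / (h - t) - c' (Suc m) t\<bar>"
      have w1: "1 \<le> real (Suc m) powr \<mu>"
        by (rule ge_one_powr_ge_zero) (use mu in auto)
      have "norm ((c k h - c k t) / (h - t) - c' k t) \<le> ?f m"
        using w1 by (simp add: km mult_le_cancel_right1)
      also have "?f m \<le> suminf ?f"
        using sum_le_suminf[OF sq[OF elim], of "{m}"] by simp
      finally show ?case by (simp add: wnorm_def)
    qed
  qed
  then have "((\<lambda>h. (c k h - c k t) / (h - t) - c' k t + c' k t) \<longlongrightarrow> 0 + c' k t) (at t)"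
    by (intro tendsto_add tendsto_const)
  then show "((\<lambda>h. (c k h - c k t) / (h - t)) \<longlongrightarrow> c' k t) (at t)" by simp
qed

theorem mainTheorem13:
  fixes a :: "nat \<Rightarrow> nat \<Rightarrow> real" and r s :: "nat \<Rightarrow> real"
    and A\<^sub>s R\<^sub>s \<alpha> \<beta> \<gamma> :: real
    and c d :: "nat \<Rightarrow> real \<Rightarrow> real" and \<mu> :: real
  assumes A_pos: "A\<^sub>s > 0"
    and alpha_beta: "0 \<le> \<alpha>" "\<alpha> \<le> \<beta>" "\<beta> \<le> 1"
    and a_sym: "\<And>k l. k \<ge> 1 \<Longrightarrow> l \<ge> 1 \<Longrightarrow> a k l = a l k"
    and a_bound: "\<And>k l. k \<ge> 1 \<Longrightarrow> l \<ge> 1 \<Longrightarrow>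
        0 \<le> a k l \<and> a k l \<le> A\<^sub>s * (real k powr \<alpha> * real l powr \<beta> + real k powr \<beta> * real l powr \<alpha>)"
    and R_pos: "R\<^sub>s > 0"
    and gamma: "\<gamma> > max 0 (\<alpha> + \<beta> - 1)"
    and r_bound: "\<And>k. k \<ge> 1 \<Longrightarrow> r k \<ge> R\<^sub>s * real k powr \<gamma>"
    and s_nonneg: "\<And>k. k \<ge> 1 \<Longrightarrow> s k \<ge> 0"
    and s_moments: "\<And>\<nu>. \<nu> \<ge> 0 \<Longrightarrow> \<exists>\<ss>>0.
        summable (\<lambda>k. real (Suc k) powr \<nu> * s (Suc k)) \<and>
        (\<Sum>k. real (Suc k) powr \<nu> * s (Suc k)) \<le> \<ss>"
    and c_sol: "is_global_solution a s r c"
    and d_sol: "is_global_solution a s r d"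
    and mu: "\<mu> \<ge> 1"
  shows "\<forall>t>0.
    upper_right_dini (\<lambda>\<tau>. wnorm \<mu> (\<lambda>k. c k \<tau> - d k \<tau>)) t
    \<le> ereal ((2 * A\<^sub>s * (2 powr (max (\<mu> - 2) 0) * max \<mu> (\<mu> * (\<mu> - 1)) + 2)
              * (\<Sum>l. real (Suc l) powr (\<mu> + \<beta>) * (c (Suc l) t + d (Suc l) t)) - R\<^sub>s)
             * wnorm \<mu> (\<lambda>k. c k t - d k t))"
proof (intro allI impI)
  fix t :: real assume t: "t > 0"
  have b: "0 \<le> \<beta>" "\<beta> \<le> 1" using alpha_beta by auto
  have mu0: "\<mu> \<ge> 0" using mu by simp
  from c_sol have c0: "\<And>k \<tau>. k \<ge> 1 \<Longrightarrow> \<tau> \<ge> 0 \<Longrightarrow> c k \<tau> \<ge> 0"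
    and cder: "\<And>k \<tau>. k \<ge> 1 \<Longrightarrow> \<tau> > 0 \<Longrightarrow> (c k has_real_derivative coag_rhs a s r c k \<tau>) (at \<tau>)"
    and cC1: "\<And>\<nu>. \<nu> \<ge> 1 \<Longrightarrow> \<exists>c'. \<forall>t>0.
          wsummable \<nu> (\<lambda>k. c k t) \<and> wsummable \<nu> (\<lambda>k. c' k t)
        \<and> ((\<lambda>h. wnorm \<nu> (\<lambda>k. (c k h - c k t) / (h - t) - c' k t)) \<longlongrightarrow> 0) (at t)
        \<and> ((\<lambda>h. wnorm \<nu> (\<lambda>k. c' k h - c' k t)) \<longlongrightarrow> 0) (at t)"
    unfolding is_global_solution_def by blast+
  from d_sol have d0: "\<And>k \<tau>. k \<ge> 1 \<Longrightarrow> \<tau> \<ge> 0 \<Longrightarrow> d k \<tau> \<ge> 0"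
    and dder: "\<And>k \<tau>. k \<ge> 1 \<Longrightarrow> \<tau> > 0 \<Longrightarrow> (d k has_real_derivative coag_rhs a s r d k \<tau>) (at \<tau>)"
    and dC1: "\<And>\<nu>. \<nu> \<ge> 1 \<Longrightarrow> \<exists>d'. \<forall>t>0.
          wsummable \<nu> (\<lambda>k. d k t) \<and> wsummable \<nu> (\<lambda>k. d' k t)
        \<and> ((\<lambda>h. wnorm \<nu> (\<lambda>k. (d k h - d k t) / (h - t) - d' k t)) \<longlongrightarrow> 0) (at t)
        \<and> ((\<lambda>h. wnorm \<nu> (\<lambda>k. d' k h - d' k t)) \<longlongrightarrow> 0) (at t)"
    unfolding is_global_solution_def by blast+
  obtain c' where c': "\<And>\<tau>. \<tau> > 0 \<Longrightarrow> wsummable \<mu> (\<lambda>k. c k \<tau>) \<and> wsummable \<mu> (\<lambda>k. c' k \<tau>)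
        \<and> ((\<lambda>h. wnorm \<mu> (\<lambda>k. (c k h - c k \<tau>) / (h - \<tau>) - c' k \<tau>)) \<longlongrightarrow> 0) (at \<tau>)"
    using cC1[OF mu] by blast
  obtain d' where d': "\<And>\<tau>. \<tau> > 0 \<Longrightarrow> wsummable \<mu> (\<lambda>k. d k \<tau>) \<and> wsummable \<mu> (\<lambda>k. d' k \<tau>)
        \<and> ((\<lambda>h. wnorm \<mu> (\<lambda>k. (d k h - d k \<tau>) / (h - \<tau>) - d' k \<tau>)) \<longlongrightarrow> 0) (at \<tau>)"
    using dC1[OF mu] by blast
  have mb: "\<mu> + \<beta> \<ge> 1" using mu b by simp
  have cb: "wsummable (\<mu> + \<beta>) (\<lambda>k. c k t)" using cC1[OF mb] t by blast
  have db: "wsummable (\<mu> + \<beta>) (\<lambda>k. d k t)" using dC1[OF mb] t by blast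
  have wc: "\<And>\<tau>. \<tau> > 0 \<Longrightarrow> wsummable \<mu> (\<lambda>k. c k \<tau>)" using c' by blast
  have wc': "wsummable \<mu> (\<lambda>k. c' k t)" using c'[OF t] by blast
  have lc: "((\<lambda>h. wnorm \<mu> (\<lambda>k. (c k h - c k t) / (h - t) - c' k t)) \<longlongrightarrow> 0) (at t)" using c'[OF t] by blast
  have qc1: "\<And>h. h > 0 \<Longrightarrow> summable (\<lambda>m. real (Suc m) powr \<mu> * \<bar>(c (Suc m) h - c (Suc m) t) / (h - t) - c' (Suc m) t\<bar>)"
    by (rule quot_facts(1)[of \<mu> c c' t]) (use wc wc' t mu0 lc in auto)
  have qc2: "\<And>k. k \<ge> 1 \<Longrightarrow> ((\<lambda>h. (c k h - c k t) / (h - t)) \<longlongrightarrow> c' k t) (at t)"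
    by (rule quot_facts(2)[of \<mu> c c' t]) (use wc wc' t mu0 lc in auto)
  have wd: "\<And>\<tau>. \<tau> > 0 \<Longrightarrow> wsummable \<mu> (\<lambda>k. d k \<tau>)" using d' by blast
  have wd': "wsummable \<mu> (\<lambda>k. d' k t)" using d'[OF t] by blast
  have ld: "((\<lambda>h. wnorm \<mu> (\<lambda>k. (d k h - d k t) / (h - t) - d' k t)) \<longlongrightarrow> 0) (at t)" using d'[OF t] by blast
  have qd1: "\<And>h. h > 0 \<Longrightarrow> summable (\<lambda>m. real (Suc m) powr \<mu> * \<bar>(d (Suc m) h - d (Suc m) t) / (h - t) - d' (Suc m) t\<bar>)"
    by (rule quot_facts(1)[of \<mu> d d' t]) (use wd wd' t mu0 ld in auto)
  have qd2: "\<And>k. k \<ge> 1 \<Longrightarrow> ((\<lambda>h. (d k h - d k t) / (h - t)) \<longlongrightarrow> d' k t) (at t)"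
    by (rule quot_facts(2)[of \<mu> d d' t]) (use wd wd' t mu0 ld in auto)
  have cid: "c' k t = coag_rhs a s r c k t" if k: "k \<ge> 1" for k
    by (rule tendsto_unique[OF trivial_limit_at qc2[OF k]])
       (use cder[OF k t] in \<open>simp add: has_field_derivative_iff\<close>)
  have did: "d' k t = coag_rhs a s r d k t" if k: "k \<ge> 1" for k
    by (rule tendsto_unique[OF trivial_limit_at qd2[OF k]])
       (use dder[OF k t] in \<open>simp add: has_field_derivative_iff\<close>)
  show "upper_right_dini (\<lambda>\<tau>. wnorm \<mu> (\<lambda>k. c k \<tau> - d k \<tau>)) t
    \<le> ereal ((2 * A\<^sub>s * (2 powr (max (\<mu> - 2) 0) * max \<mu> (\<mu> * (\<mu> - 1)) + 2)
              * (\<Sum>l. real (Suc l) powr (\<mu> + \<beta>) * (c (Suc l) t + d (Suc l) t)) - R\<^sub>s)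
             * wnorm \<mu> (\<lambda>k. c k t - d k t))"
  proof -
    define w where "w k = real (Suc k) powr \<mu>" for k :: nat
    define x where "x k h = c (Suc k) h - d (Suc k) h" for k h
    define yv where "yv k = c' k t - d' k t" for k
    have w0: "w k \<ge> 0" for k by (simp add: w_def)
    have sx: "summable (\<lambda>k. w k * \<bar>x k h\<bar>)" if h: "h \<ge> t" for h
    proof -
      have h0: "h > 0" using h t by simp
      have "summable (\<lambda>k. w k * \<bar>c (Suc k) h\<bar> + w k * \<bar>d (Suc k) h\<bar>)"
        using wc[OF h0] wd[OF h0] by (intro summable_add) (simp_all add: wsummable_def w_def)
      then show ?thesis
      proof (rule summable_comparison_test'[where N=0])
        fix n
        have "w n * \<bar>x n h\<bar> \<le> w n * (\<bar>c (Suc n) h\<bar> + \<bar>d (Suc n) h\<bar>)"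
          by (rule mult_left_mono[OF _ w0]) (simp add: x_def abs_triangle_ineq4)
        then show "norm (w n * \<bar>x n h\<bar>) \<le> w n * \<bar>c (Suc n) h\<bar> + w n * \<bar>d (Suc n) h\<bar>"
          using w0[of n] by (simp add: algebra_simps)
      qed
    qed
    have sy: "summable (\<lambda>k. w k * \<bar>yv (Suc k)\<bar>)"
    proof -
      have "summable (\<lambda>k. w k * \<bar>c' (Suc k) t\<bar> + w k * \<bar>d' (Suc k) t\<bar>)"
        using wc' wd' by (intro summable_add) (simp_all add: wsummable_def w_def)
      then show ?thesis
      proof (rule summable_comparison_test'[where N=0])
        fix n
        have "w n * \<bar>yv (Suc n)\<bar> \<le> w n * (\<bar>c' (Suc n) t\<bar> + \<bar>d' (Suc n) t\<bar>)"
          by (rule mult_left_mono[OF _ w0]) (simp add: yv_def abs_triangle_ineq4)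
        then show "norm (w n * \<bar>yv (Suc n)\<bar>) \<le> w n * \<bar>c' (Suc n) t\<bar> + w n * \<bar>d' (Suc n) t\<bar>"
          using w0[of n] by (simp add: algebra_simps)
      qed
    qed
    define qcd where "qcd h k = w k * \<bar>(c (Suc k) h - c (Suc k) t) / (h - t) - c' (Suc k) t\<bar>
                              + w k * \<bar>(d (Suc k) h - d (Suc k) t) / (h - t) - d' (Suc k) t\<bar>" for h k
    have qle: "w k * \<bar>(x k h - x k t) / (h - t) - yv (Suc k)\<bar> \<le> qcd h k" for h k
    proof -
      have "(x k h - x k t) / (h - t) - yv (Suc k)
          = ((c (Suc k) h - c (Suc k) t) / (h - t) - c' (Suc k) t) - ((d (Suc k) h - d (Suc k) t) / (h - t) - d' (Suc k) t)"
        by (simp add: x_def yv_def diff_divide_distrib)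
      then have "\<bar>(x k h - x k t) / (h - t) - yv (Suc k)\<bar>
          \<le> \<bar>(c (Suc k) h - c (Suc k) t) / (h - t) - c' (Suc k) t\<bar> + \<bar>(d (Suc k) h - d (Suc k) t) / (h - t) - d' (Suc k) t\<bar>"
        by (simp only: abs_triangle_ineq4)
      then have "w k * \<bar>(x k h - x k t) / (h - t) - yv (Suc k)\<bar>
          \<le> w k * (\<bar>(c (Suc k) h - c (Suc k) t) / (h - t) - c' (Suc k) t\<bar> + \<bar>(d (Suc k) h - d (Suc k) t) / (h - t) - d' (Suc k) t\<bar>)"
        by (rule mult_left_mono[OF _ w0])
      then show ?thesis unfolding qcd_def by (simp only: distrib_left)
    qed
    have sqcd: "summable (qcd h)" if "h > 0" for h
      unfolding qcd_def[abs_def] using qc1[OF that] qd1[OF that] by (intro summable_add) (simp_all add: w_def)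
    have sq: "summable (\<lambda>k. w k * \<bar>(x k h - x k t) / (h - t) - yv (Suc k)\<bar>)" if "h > t" for h
    proof (rule summable_comparison_test'[OF sqcd[of h], where N=0])
      show "h > 0" using that t by simp
      fix n
      show "norm (w n * \<bar>(x n h - x n t) / (h - t) - yv (Suc n)\<bar>) \<le> qcd h n"
        using qle[of n h] w0[of n] by simp
    qed
    have lim: "((\<lambda>h. \<Sum>k. w k * \<bar>(x k h - x k t) / (h - t) - yv (Suc k)\<bar>) \<longlongrightarrow> 0) (at_right t)"
    proof (rule Lim_null_comparison)
      have "((\<lambda>h. wnorm \<mu> (\<lambda>k. (c k h - c k t) / (h - t) - c' k t) + wnorm \<mu> (\<lambda>k. (d k h - d k t) / (h - t) - d' k t)) \<longlongrightarrow> 0 + 0) (at t)"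
        by (intro tendsto_add lc ld)
      show "((\<lambda>h. wnorm \<mu> (\<lambda>k. (c k h - c k t) / (h - t) - c' k t) + wnorm \<mu> (\<lambda>k. (d k h - d k t) / (h - t) - d' k t)) \<longlongrightarrow> 0) (at_right t)"
      proof (rule tendsto_mono)
        show "at_right t \<le> at t" using at_le[of "{t<..}" UNIV t] by simp
        show "((\<lambda>h. wnorm \<mu> (\<lambda>k. (c k h - c k t) / (h - t) - c' k t) + wnorm \<mu> (\<lambda>k. (d k h - d k t) / (h - t) - d' k t)) \<longlongrightarrow> 0) (at t)"
          using \<open>(_ \<longlongrightarrow> 0 + 0) (at t)\<close> by simp
      qed
      show "\<forall>\<^sub>F h in at_right t. norm (\<Sum>k. w k * \<bar>(x k h - x k t) / (h - t) - yv (Suc k)\<bar>)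
           \<le> wnorm \<mu> (\<lambda>k. (c k h - c k t) / (h - t) - c' k t) + wnorm \<mu> (\<lambda>k. (d k h - d k t) / (h - t) - d' k t)"
        using eventually_at_right_less[of t]
      proof eventually_elim
        case (elim h)
        have h0: "h > 0" using elim t by simp
        have "norm (\<Sum>k. w k * \<bar>(x k h - x k t) / (h - t) - yv (Suc k)\<bar>) = (\<Sum>k. w k * \<bar>(x k h - x k t) / (h - t) - yv (Suc k)\<bar>)"
          using suminf_nonneg[OF sq[OF elim]] w0 by simp
        also have "\<dots> \<le> suminf (qcd h)"
          by (rule suminf_le[OF qle sq[OF elim] sqcd[OF h0]])
        also have "\<dots> = wnorm \<mu> (\<lambda>k. (c k h - c k t) / (h - t) - c' k t) + wnorm \<mu> (\<lambda>k. (d k h - d k t) / (h - t) - d' k t)"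
          unfolding qcd_def using qc1[OF h0] qd1[OF h0]
          by (subst suminf_add[symmetric]) (simp_all add: wnorm_def w_def)
        finally show ?case .
      qed
    qed
    note dini = dini_series[where x=x and w=w and t=t and y="\<lambda>k. yv (Suc k)", OF w0 sx sy sq lim]
    define Dv where "Dv = (\<Sum>k. w k * (if x k t = 0 then \<bar>yv (Suc k)\<bar> else sgn (x k t) * yv (Suc k)))"
    have "upper_right_dini (\<lambda>\<tau>. wnorm \<mu> (\<lambda>k. c k \<tau> - d k \<tau>)) t = ereal Dv"
      unfolding upper_right_dini_def Dv_def
      by (rule lim_imp_Limsup[OF trivial_limit_at_right_real], rule tendsto_ereal)
         (use dini in \<open>simp add: wnorm_def w_def x_def\<close>)
    moreover have "Dv \<le> (2 * A\<^sub>s * (2 powr (max (\<mu> - 2) 0) * max \<mu> (\<mu> * (\<mu> - 1)) + 2)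
              * (\<Sum>l. real (Suc l) powr (\<mu> + \<beta>) * (c (Suc l) t + d (Suc l) t)) - R\<^sub>s)
             * wnorm \<mu> (\<lambda>k. c k t - d k t)"
    proof -
      define \<sigma> where "\<sigma> k = (if c k t - d k t = 0 then sgn (yv k) else sgn (c k t - d k t))" for k
      define M where "M = (\<Sum>l. real (Suc l) powr (\<mu> + \<beta>) * (c (Suc l) t + d (Suc l) t))"
      define N where "N = (\<Sum>k. real (Suc k) powr \<mu> * \<bar>c (Suc k) t - d (Suc k) t\<bar>)"
      define Cm where "Cm = 2 powr (max (\<mu> - 2) 0) * max \<mu> (\<mu> * (\<mu> - 1))"
      have Dv_eq: "Dv = (\<Sum>k. real (Suc k) powr \<mu> * (\<sigma> (Suc k) * yv (Suc k)))"
        unfolding Dv_def by (rule suminf_cong) (auto simp: w_def x_def \<sigma>_def sgn_if)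
      have sC: "summable (\<lambda>k. real (Suc k) powr (\<mu> + \<beta>) * c (Suc k) t)"
        using cb c0[of _ t] t by (simp add: wsummable_def)
      have sD: "summable (\<lambda>k. real (Suc k) powr (\<mu> + \<beta>) * d (Suc k) t)"
        using db d0[of _ t] t by (simp add: wsummable_def)
      have est: "(\<Sum>k. real (Suc k) powr \<mu> * (\<sigma> (Suc k) * yv (Suc k)))
          \<le> (A\<^sub>s * (\<mu> * 2 powr (\<mu> - 1) + 1) * M - R\<^sub>s) * N"
        unfolding M_def N_def
      proof (rule main_estimate[where a=a and r=r and s=s and A=A\<^sub>s and R=R\<^sub>s and \<beta>=\<beta> and \<mu>=\<mu>
                 and C="\<lambda>k. c k t" and Dd="\<lambda>k. d k t" and \<sigma>=\<sigma> and y=yv])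
        show "A\<^sub>s > 0" by (rule A_pos)
        show "0 \<le> \<beta>" "\<beta> \<le> 1" by (rule b(1), rule b(2))
        show "\<mu> \<ge> 1" by (rule mu)
        show "\<And>k l. k \<ge> 1 \<Longrightarrow> l \<ge> 1 \<Longrightarrow> a k l = a l k" by (rule a_sym)
        show "\<And>k l. k \<ge> 1 \<Longrightarrow> l \<ge> 1 \<Longrightarrow> 0 \<le> a k l" using a_bound by blast
        show "a k l \<le> 2 * A\<^sub>s * (real k powr \<beta> * real l powr \<beta>)" if "k \<ge> 1" "l \<ge> 1" for k l
        proof -
          have k1: "real k \<ge> 1" and l1: "real l \<ge> 1" using that by auto
          have "real k powr \<alpha> \<le> real k powr \<beta>" "real l powr \<alpha> \<le> real l powr \<beta>"
            using powr_mono[OF alpha_beta(2) k1] powr_mono[OF alpha_beta(2) l1] by auto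
          then have "real k powr \<alpha> * real l powr \<beta> + real k powr \<beta> * real l powr \<alpha>
              \<le> real k powr \<beta> * real l powr \<beta> + real k powr \<beta> * real l powr \<beta>"
            by (intro add_mono mult_right_mono mult_left_mono) auto
          then have "A\<^sub>s * (real k powr \<alpha> * real l powr \<beta> + real k powr \<beta> * real l powr \<alpha>)
              \<le> A\<^sub>s * (real k powr \<beta> * real l powr \<beta> + real k powr \<beta> * real l powr \<beta>)"
            using A_pos by (intro mult_left_mono) auto
          then show ?thesis using a_bound[OF that] by simp
        qed
        show "r k \<ge> R\<^sub>s" if "k \<ge> 1" for k
        proof -
          have "1 \<le> real k powr \<gamma>" by (rule ge_one_powr_ge_zero) (use that gamma in auto)
          then have "R\<^sub>s \<le> R\<^sub>s * real k powr \<gamma>" using R_pos by (simp add: mult_le_cancel_left1)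
          then show ?thesis using r_bound[OF that] by simp
        qed
        show "\<And>k. k \<ge> 1 \<Longrightarrow> c k t \<ge> 0" using c0 t by simp
        show "\<And>k. k \<ge> 1 \<Longrightarrow> d k t \<ge> 0" using d0 t by simp
        show "summable (\<lambda>k. real (Suc k) powr (\<mu> + \<beta>) * c (Suc k) t)" by (rule sC)
        show "summable (\<lambda>k. real (Suc k) powr (\<mu> + \<beta>) * d (Suc k) t)" by (rule sD)
        show "\<bar>\<sigma> k\<bar> \<le> 1" for k by (simp add: \<sigma>_def sgn_if)
        show "\<sigma> k * (c k t - d k t) = \<bar>c k t - d k t\<bar>" for k by (simp add: \<sigma>_def sgn_if)
        show "summable (\<lambda>k. real (Suc k) powr \<mu> * \<bar>yv (Suc k)\<bar>)" using sy by (simp add: w_def)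
        show "yv k =
           ((1/2) * (\<Sum>l=1..k-1. a (k-l) l * c (k-l) t * c l t) - c k t * (\<Sum>l. a k (Suc l) * c (Suc l) t) + s k - r k * c k t)
         - ((1/2) * (\<Sum>l=1..k-1. a (k-l) l * d (k-l) t * d l t) - d k t * (\<Sum>l. a k (Suc l) * d (Suc l) t) + s k - r k * d k t)"
          if "k \<ge> 1" for k
          using cid[OF that] did[OF that] by (simp add: yv_def coag_rhs_def)
      qed
      have M0: "M \<ge> 0" unfolding M_def
        by (rule suminf_nonneg) (use summable_add[OF sC sD] c0 d0 t in \<open>simp_all add: algebra_simps\<close>)
      have N0: "N \<ge> 0" unfolding N_def
        by (rule suminf_nonneg) (use sx[of t] in \<open>simp_all add: w_def x_def\<close>)
      have "\<mu> * 2 powr (\<mu> - 1) + 1 \<le> 2 * (Cm + 2)" using const_le[OF mu] by (simp add: Cm_def)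
      then have "A\<^sub>s * (\<mu> * 2 powr (\<mu> - 1) + 1) * M \<le> 2 * A\<^sub>s * (Cm + 2) * M"
        using A_pos M0 by (intro mult_right_mono) auto
      then have "(A\<^sub>s * (\<mu> * 2 powr (\<mu> - 1) + 1) * M - R\<^sub>s) * N \<le> (2 * A\<^sub>s * (Cm + 2) * M - R\<^sub>s) * N"
        using N0 by (intro mult_right_mono) auto
      with est Dv_eq show ?thesis by (simp add: M_def N_def Cm_def wnorm_def)
    qed
    ultimately show ?thesis by simp
  qed
qed

end
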